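(* Let $C>0$ be a constant. There is a constant $C'>0$, depending only on $C$, such that the following holds. Let $n\ge 1$, let $P\in\mathbb{R}^{n\times n}$ be a matrix with non-negative entries, and let $w,v\in\mathbb{R}^n$ satisfy $\|w\|_\infty\le C n^{-1/2}$ and $\|v\|_\infty\le C n^{-1/2}$. Define $$L(w,v)=\langle w,Pv\rangle-\sum_{i=1}^n\log\Big(\sum_{j=1}^n\exp(w_iv_j)\Big).$$ Then $$\left| L(w,v)-\left(\langle w,Pv\rangle-\frac1n\Big(\sum_{i=1}^n w_i\Big)\Big(\sum_{j=1}^n v_j\Big)-\frac1n\sum_{i,j=1}^n\frac{w_i^2v_j^2}{2}-n\log n\right)\right|\le \frac{C'}{n}.$$
   Context: $\langle\cdot,\cdot\rangle$ is the standard inner product on $\mathbb{R}^n$ and $\|\cdot\|_\infty$ the maximum norm. The paper states the hypothesis as $\|v\|_\infty,\|w\|_\infty\lesssim n^{-1/2}$ and the conclusion with an error term $\mathcal{O}(n^{-1})$, where $\lesssim$ and $\mathcal{O}$ hide constants depending only on the implicit constant in the hypothesis. *)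

theory Defs
  imports Complex_Main
begin

text \<open>Vectors in R^n are functions nat => real, indices i < n (0-based);
  matrices are nat => nat => real with entries P i j, i, j < n.\<close>

definition inner_n :: "nat \<Rightarrow> (nat \<Rightarrow> real) \<Rightarrow> (nat \<Rightarrow> real) \<Rightarrow> real" where
  "inner_n n x y = (\<Sum>i<n. x i * y i)"

definition matvec_n :: "nat \<Rightarrow> (nat \<Rightarrow> nat \<Rightarrow> real) \<Rightarrow> (nat \<Rightarrow> real) \<Rightarrow> (nat \<Rightarrow> real)" where
  "matvec_n n P x = (\<lambda>i. \<Sum>j<n. P i j * x j)"

definition maxnorm_n :: "nat \<Rightarrow> (nat \<Rightarrow> real) \<Rightarrow> real" where
  "maxnorm_n n x = Max (insert 0 ((\<lambda>i. \<bar>x i\<bar>) ` {..<n}))"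

definition L_fun :: "nat \<Rightarrow> (nat \<Rightarrow> nat \<Rightarrow> real) \<Rightarrow> (nat \<Rightarrow> real) \<Rightarrow> (nat \<Rightarrow> real) \<Rightarrow> real" where
  "L_fun n P w v = inner_n n w (matvec_n n P v) - (\<Sum>i<n. ln (\<Sum>j<n. exp (w i * v j)))"

end

theory Submission
  imports Defs begin

lemma exp_taylor3:
  fixes x M :: real
  assumes "\<bar>x\<bar> \<le> M"
  shows "\<bar>exp x - 1 - x - x^2/2\<bar> \<le> exp M * \<bar>x\<bar>^3"
proof -
  obtain t where t: "\<bar>t\<bar> \<le> \<bar>x\<bar>" "exp x = (\<Sum>m<3. (x ^ m) / fact m) + (exp t / fact 3) * x ^ 3"
    using Maclaurin_exp_le[of x 3] by blast
  have s: "(\<Sum>m<3. (x ^ m) / fact m) = 1 + x + x^2/2"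
    by (simp add: numeral_3_eq_3 fact_numeral power2_eq_square)
  have "\<bar>exp x - 1 - x - x^2/2\<bar> = exp t / 6 * \<bar>x\<bar>^3"
    using t(2) s by (simp add: fact_numeral abs_mult power_abs)
  also have "\<dots> \<le> exp M * \<bar>x\<bar>^3"
  proof (rule mult_right_mono)
    have "exp t \<le> exp M" using t(1) assms by simp
    then show "exp t / 6 \<le> exp M" using exp_gt_zero[of t] by linarith
  qed simp
  finally show ?thesis .
qed

lemma ln_quad:
  fixes u :: real
  assumes "u > 0"
  shows "0 \<le> (u - 1) - ln u \<and> (u - 1) - ln u \<le> (u-1)^2 / u"
proof -
  have a: "ln u \<le> u - 1" using ln_le_minus_one assms by blast
  have "ln (1/u) \<le> 1/u - 1" using ln_le_minus_one assms by simp
  then have b: "- ln u \<le> 1/u - 1" using assms by (simp add: ln_div)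
  have "(u-1)^2/u = (u - 1) - (1 - 1/u)" using assms by (simp add: field_simps power2_eq_square)
  then show ?thesis using a b by linarith
qed

lemma row_bound:
  fixes x :: "nat \<Rightarrow> real" and M :: real and n :: nat
  assumes n: "n \<ge> 1" and M: "M \<ge> 0" and xb: "\<forall>j<n. \<bar>x j\<bar> \<le> M / n"
  defines "K1 \<equiv> exp M * M^3"
  defines "K2 \<equiv> M + M^2 + K1"
  shows "\<bar>ln (\<Sum>j<n. exp (x j)) - ln n - (1/n) * (\<Sum>j<n. x j + (x j)^2/2)\<bar>
           \<le> (exp M * K2^2 + K1) / (real n)^2"
proof -
  have npos: "real n > 0" "real n \<ge> 1" using n by auto
  have xM: "\<bar>x j\<bar> \<le> M" if "j<n" for j
  proof -
    have "M / n \<le> M" using mult_left_mono[of 1 "real n" M] npos M by (simp add: divide_le_eq)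
    then show ?thesis using xb that by fastforce
  qed
  define t where "t = (1/n) * (\<Sum>j<n. x j + (x j)^2/2)"
  define u where "u = (1/n) * (\<Sum>j<n. exp (x j))"
  define e where "e j = exp (x j) - 1 - x j - (x j)^2/2" for j
  have K1: "K1 \<ge> 0" unfolding K1_def using M by simp
  have eb: "\<bar>e j\<bar> \<le> K1 / (real n)^3" if "j<n" for j
  proof -
    have "\<bar>e j\<bar> \<le> exp M * \<bar>x j\<bar>^3" unfolding e_def using exp_taylor3 xM that by blast
    also have "\<dots> \<le> exp M * (M/n)^3"
      using xb that by (intro mult_left_mono power_mono) auto
    finally show ?thesis by (simp add: K1_def power_divide)
  qed
  have se: "(\<Sum>j<n. e j) = (\<Sum>j<n. exp (x j)) - n - (\<Sum>j<n. x j + (x j)^2/2)"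
    unfolding e_def by (simp add: sum_subtractf sum.distrib algebra_simps)
  have ut: "u - 1 - t = (1/n) * (\<Sum>j<n. e j)"
    unfolding se u_def t_def using npos by (simp add: right_diff_distrib)
  have "\<bar>\<Sum>j<n. e j\<bar> \<le> (\<Sum>j<n. K1 / (real n)^3)"
    by (rule order_trans[OF sum_abs sum_mono]) (use eb in auto)
  also have "\<dots> = n * (K1 / (real n)^3)" by simp
  finally have "\<bar>u - 1 - t\<bar> \<le> (1/n) * (n * (K1 / (real n)^3))"
    unfolding ut using npos by (simp add: abs_mult divide_le_eq mult.commute)
  then have ut3: "\<bar>u - 1 - t\<bar> \<le> K1 / (real n)^3" using npos by simp
  have nn: "1 \<le> real n * real n" using npos mult_mono[of 1 "real n" 1 "real n"] by simp
  have nnn: "real n \<le> real n * (real n * real n)" using npos nn mult_left_mono[of 1 "real n * real n" "real n"] by simp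
  have nnn2: "real n * real n \<le> real n * (real n * real n)" using npos mult_left_mono[of 1 "real n" "real n * real n"] by simp
  have K13: "K1 / (real n)^3 \<le> K1 / real n"
    using npos K1 nnn by (intro divide_left_mono) (auto simp: power3_eq_cube)
  have K1n2: "K1 / (real n)^3 \<le> K1 / (real n)^2"
    using npos K1 nnn2 by (intro divide_left_mono) (auto simp: power3_eq_cube power2_eq_square)
  have tb1: "\<bar>x j + (x j)^2/2\<bar> \<le> (M + M^2) / n" if "j<n" for j
  proof -
    have a: "\<bar>x j\<bar> \<le> M/n" using xb that by auto
    have "(x j)^2 = \<bar>x j\<bar>^2" by simp
    also have "\<dots> \<le> (M/n)^2" using a by (intro power_mono) auto
    also have "\<dots> \<le> M^2/n"
    proof -
      have "real n * 1 \<le> real n * real n" using npos by (intro mult_left_mono) auto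
      then have "M^2/(real n * real n) \<le> M^2/real n" using npos
        by (intro divide_left_mono) auto
      then show ?thesis by (simp add: power_divide power2_eq_square)
    qed
    finally have b: "(x j)^2 \<le> M^2/n" .
    have "\<bar>x j + (x j)^2/2\<bar> \<le> \<bar>x j\<bar> + \<bar>(x j)^2/2\<bar>" by (rule abs_triangle_ineq)
    also have "\<dots> \<le> \<bar>x j\<bar> + (x j)^2" by simp
    also have "\<dots> \<le> M/n + M^2/n" using a b by linarith
    finally show ?thesis by (simp add: add_divide_distrib)
  qed
  have "\<bar>\<Sum>j<n. x j + (x j)^2/2\<bar> \<le> (\<Sum>j<n. (M + M^2) / n)"
    by (rule order_trans[OF sum_abs sum_mono]) (use tb1 in auto)
  also have "\<dots> = M + M^2" using npos by simp
  finally have "\<bar>t\<bar> \<le> (1/n) * (M + M^2)" unfolding t_def using npos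
    by (simp add: abs_mult divide_le_eq mult.commute)
  then have tb: "\<bar>t\<bar> \<le> (M + M^2) / n" by simp
  have u1: "\<bar>u - 1\<bar> \<le> K2 / n"
  proof -
    have "\<bar>u - 1\<bar> \<le> \<bar>t\<bar> + \<bar>u - 1 - t\<bar>" by linarith
    also have "\<dots> \<le> (M + M^2) / n + K1 / n" using tb ut3 K13 by linarith
    finally show ?thesis by (simp add: K2_def add_divide_distrib)
  qed
  have ulow: "u \<ge> exp (-M)"
  proof -
    have "(\<Sum>j<n. exp (-M)) \<le> (\<Sum>j<n. exp (x j))"
      by (rule sum_mono) (use xM in \<open>force simp: abs_le_iff\<close>)
    then have "n * exp (-M) \<le> (\<Sum>j<n. exp (x j))" by simp
    then show ?thesis unfolding u_def using npos by (simp add: field_simps)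
  qed
  have upos: "u > 0" using ulow exp_gt_zero[of "-M"] by linarith
  have lnS: "ln (\<Sum>j<n. exp (x j)) = ln n + ln u"
  proof -
    have "(\<Sum>j<n. exp (x j)) = n * u" unfolding u_def using npos by simp
    then show ?thesis using npos upos by (simp add: ln_mult)
  qed
  have q: "0 \<le> (u - 1) - ln u" "(u - 1) - ln u \<le> (u-1)^2 / u" using ln_quad upos by auto
  have "(u-1)^2 / u \<le> (u-1)^2 * exp M"
  proof -
    have "1/u \<le> exp M" using ulow upos by (simp add: exp_minus field_simps)
    then show ?thesis by (metis divide_inverse inverse_eq_divide mult_left_mono zero_le_power2)
  qed
  also have "(u-1)^2 \<le> (K2/n)^2"
    using u1 by (metis abs_ge_zero power2_abs power_mono)
  finally have q2: "(u - 1) - ln u \<le> exp M * K2^2 / (real n)^2"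
    using q by (smt (verit) exp_gt_zero mult_left_mono power_divide mult.commute times_divide_eq_right)
  have "\<bar>ln (\<Sum>j<n. exp (x j)) - ln n - t\<bar> = \<bar>ln u - t\<bar>" using lnS by simp
  also have "\<dots> \<le> ((u - 1) - ln u) + \<bar>u - 1 - t\<bar>" using q by linarith
  also have "\<dots> \<le> exp M * K2^2 / (real n)^2 + K1 / (real n)^2" using q2 ut3 K1n2 by linarith
  finally show ?thesis unfolding t_def by (simp add: add_divide_distrib)
qed

lemma maxnorm_bound:
  assumes "i < n" shows "\<bar>x i\<bar> \<le> maxnorm_n n x"
  unfolding maxnorm_n_def using assms by (intro Max_ge) auto

theorem theorem3p1:
  fixes C :: real
  assumes "C > 0"
  shows "\<exists>C'>0. \<forall>(n::nat) (P::nat \<Rightarrow> nat \<Rightarrow> real) (w::nat \<Rightarrow> real) (v::nat \<Rightarrow> real).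
      n \<ge> 1 \<longrightarrow> (\<forall>i<n. \<forall>j<n. P i j \<ge> 0) \<longrightarrow>
      maxnorm_n n w \<le> C * real n powr (-1/2) \<longrightarrow>
      maxnorm_n n v \<le> C * real n powr (-1/2) \<longrightarrow>
      \<bar>L_fun n P w v -
         (inner_n n w (matvec_n n P v)
          - (1 / real n) * (\<Sum>i<n. w i) * (\<Sum>j<n. v j)
          - (1 / real n) * (\<Sum>i<n. \<Sum>j<n. (w i)\<^sup>2 * (v j)\<^sup>2 / 2)
          - real n * ln (real n))\<bar> \<le> C' / real n"
proof -
  define M where "M = C^2"
  define K1 where "K1 = exp M * M^3"
  define K2 where "K2 = M + M^2 + K1"
  define K where "K = exp M * K2^2 + K1"
  have M0: "M \<ge> 0" unfolding M_def by simp
  have K0: "K \<ge> 0" unfolding K_def K1_def using M0 by simp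
  show ?thesis
  proof (intro exI[of _ "K + 1"] conjI allI impI)
    show "K + 1 > 0" using K0 by simp
    fix n :: nat and P :: "nat \<Rightarrow> nat \<Rightarrow> real" and w v :: "nat \<Rightarrow> real"
    assume n: "n \<ge> 1" and "\<forall>i<n. \<forall>j<n. P i j \<ge> 0" and hw: "maxnorm_n n w \<le> C * real n powr (-1/2)"
      and hv: "maxnorm_n n v \<le> C * real n powr (-1/2)"
    have npos: "real n > 0" using n by simp
    define c where "c = C / sqrt n"
    have pc: "C * real n powr (-1/2) = c"
      unfolding c_def using npos by (simp add: powr_minus_divide powr_half_sqrt)
    have c0: "c \<ge> 0" unfolding c_def using assms by simp
    have cc: "c * c = M / n" unfolding c_def M_def using npos
      by (simp add: power2_eq_square)
    have wb: "\<bar>w i\<bar> \<le> c" if "i<n" for i using maxnorm_bound[OF that, of w] hw pc by simp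
    have vb: "\<bar>v j\<bar> \<le> c" if "j<n" for j using maxnorm_bound[OF that, of v] hv pc by simp
    define t where "t i = (1/n) * (\<Sum>j<n. w i * v j + (w i * v j)^2/2)" for i
    define d where "d i = ln (\<Sum>j<n. exp (w i * v j)) - ln n - t i" for i
    have db: "\<bar>d i\<bar> \<le> K / (real n)^2" if "i<n" for i
    proof -
      have "\<bar>w i * v j\<bar> \<le> M / n" if j: "j<n" for j
      proof -
        have "\<bar>w i\<bar> * \<bar>v j\<bar> \<le> c * c"
          by (rule mult_mono) (use wb[OF \<open>i<n\<close>] vb[OF j] c0 in auto)
        then show ?thesis by (simp only: abs_mult cc)
      qed
      then have "\<forall>j<n. \<bar>w i * v j\<bar> \<le> M / n" by blast
      from row_bound[OF n M0 this] show ?thesis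
        unfolding d_def t_def K_def K2_def K1_def .
    qed
    have st: "(\<Sum>i<n. t i) = (1 / real n) * (\<Sum>i<n. w i) * (\<Sum>j<n. v j)
          + (1 / real n) * (\<Sum>i<n. \<Sum>j<n. (w i)\<^sup>2 * (v j)\<^sup>2 / 2)"
    proof -
      have "(\<Sum>i<n. t i) = (1/n) * (\<Sum>i<n. \<Sum>j<n. w i * v j + (w i * v j)^2/2)"
        unfolding t_def by (simp only: sum_distrib_left)
      also have "\<dots> = (1/n) * ((\<Sum>i<n. \<Sum>j<n. w i * v j) + (\<Sum>i<n. \<Sum>j<n. (w i)\<^sup>2 * (v j)\<^sup>2 / 2))"
        by (simp only: sum.distrib power_mult_distrib)
      also have "(\<Sum>i<n. \<Sum>j<n. w i * v j) = (\<Sum>i<n. w i) * (\<Sum>j<n. v j)"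
        by (simp only: sum_product)
      finally show ?thesis by (simp only: distrib_left mult.assoc)
    qed
    have eq: "L_fun n P w v -
         (inner_n n w (matvec_n n P v)
          - (1 / real n) * (\<Sum>i<n. w i) * (\<Sum>j<n. v j)
          - (1 / real n) * (\<Sum>i<n. \<Sum>j<n. (w i)\<^sup>2 * (v j)\<^sup>2 / 2)
          - real n * ln (real n)) = - (\<Sum>i<n. d i)"
      unfolding L_fun_def d_def using st by (simp add: sum_subtractf)
    have "\<bar>\<Sum>i<n. d i\<bar> \<le> (\<Sum>i<n. K / (real n)^2)"
      by (rule order_trans[OF sum_abs sum_mono]) (use db in auto)
    also have "\<dots> = K / n" using npos by (simp add: power2_eq_square)
    also have "\<dots> \<le> (K + 1) / n" using npos by (simp add: divide_right_mono)
    finally show "\<bar>L_fun n P w v -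
         (inner_n n w (matvec_n n P v)
          - (1 / real n) * (\<Sum>i<n. w i) * (\<Sum>j<n. v j)
          - (1 / real n) * (\<Sum>i<n. \<Sum>j<n. (w i)\<^sup>2 * (v j)\<^sup>2 / 2)
          - real n * ln (real n))\<bar> \<le> (K + 1) / real n" unfolding eq by simp
  qed
qed

end
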